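(* Let $\mathcal{P}$ be a partition of $\mathbb{F}_q^k$, $t$ a positive integer, and suppose $(U,\phi)$ is a block-preserving contraction of $\mathcal{P}$. Then $$r_{\mathcal{P}}(k,t)=N\big(\mathcal{D}_{\mathcal{P}}(t;\,u: u\in U)\big).$$
   Context: $d$ is Hamming distance. A block-preserving contraction of $\mathcal{P}$ is a pair $(U,\phi)$ with $U\subseteq\mathbb{F}_q^k$ and $\phi:\mathbb{F}_q^k\to U$ such that (i) $\phi(u)$ lies in the same block of $\mathcal{P}$ as $u$ for every $u$, and (ii) $d(\phi(u),\phi(v))\le d(u,v)$ whenever $u,v$ lie in different blocks of $\mathcal{P}$. A $(\mathcal{P},t)$-encoding with redundancy $r$ is a systematic map $\mathcal{C}:\mathbb{F}_q^k\to\mathbb{F}_q^{k+r}$, $\mathcal{C}(u)=(u,p(u))$, with $d(\mathcal{C}(u),\mathcal{C}(v))\ge 2t+1$ whenever $u,v$ lie in different blocks; $r_{\mathcal{P}}(k,t)$ is the minimum such $r$. For a finite set of distinct vectors (listed in some order) $u_1,\ldots,u_M$, $\mathcal{D}_{\mathcal{P}}(t;u_1,\ldots,u_M)$ is the $M\times M$ matrix with $(i,j)$ entry $\max(2t+1-d(u_i,u_j),0)$ if $u_i,u_j$ lie in different blocks and $0$ otherwise. For $D\in\mathbb{N}^{M\times M}$, $N(D)$ is the smallest $r\ge0$ such that there exist $z_1,\ldots,z_M\in\mathbb{F}_q^r$ with $d(z_i,z_j)\ge D_{i,j}$ for all $i\ne j$. *)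

theory Defs
  imports Main "HOL-Library.Disjoint_Sets"
begin

text \<open>Vectors of F_q^n are lists of length n over a finite field type 'a.\<close>
definition vecs :: "nat \<Rightarrow> 'a list set" where
  "vecs n = {xs. length xs = n}"

definition hamming :: "'a list \<Rightarrow> 'a list \<Rightarrow> nat" where
  "hamming xs ys = card {i. i < length xs \<and> i < length ys \<and> xs ! i \<noteq> ys ! i}"

definition same_block :: "'a set set \<Rightarrow> 'a \<Rightarrow> 'a \<Rightarrow> bool" where
  "same_block P u v \<longleftrightarrow> (\<exists>B\<in>P. u \<in> B \<and> v \<in> B)"

definition block_preserving_contraction ::
  "nat \<Rightarrow> 'a list set set \<Rightarrow> 'a list set \<Rightarrow> ('a list \<Rightarrow> 'a list) \<Rightarrow> bool" where
  "block_preserving_contraction k P U phi \<longleftrightarrow>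
     U \<subseteq> vecs k \<and>
     (\<forall>u\<in>vecs k. phi u \<in> U) \<and>
     (\<forall>u\<in>vecs k. same_block P (phi u) u) \<and>
     (\<forall>u\<in>vecs k. \<forall>v\<in>vecs k. \<not> same_block P u v \<longrightarrow>
         hamming (phi u) (phi v) \<le> hamming u v)"

text \<open>A (P,t)-encoding with redundancy r: systematic map u \<mapsto> (u, p u).\<close>
definition is_encoding ::
  "nat \<Rightarrow> 'a list set set \<Rightarrow> nat \<Rightarrow> nat \<Rightarrow> ('a list \<Rightarrow> 'a list) \<Rightarrow> bool" where
  "is_encoding k P t r p \<longleftrightarrow>
     (\<forall>u\<in>vecs k. length (p u) = r) \<and>
     (\<forall>u\<in>vecs k. \<forall>v\<in>vecs k. \<not> same_block P u v \<longrightarrow>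
         hamming (u @ p u) (v @ p v) \<ge> 2 * t + 1)"

definition r_opt :: "'a itself \<Rightarrow> nat \<Rightarrow> 'a list set set \<Rightarrow> nat \<Rightarrow> nat" where
  "r_opt _ k P t = (LEAST r. \<exists>p :: 'a list \<Rightarrow> 'a list. is_encoding k P t r p)"

text \<open>The matrix D_P(t; u : u in U), indexed by the elements of U (entries are
  max(2t+1 - d(u,v), 0), realised via truncated nat subtraction).\<close>
definition D_mat :: "'a list set set \<Rightarrow> nat \<Rightarrow> 'a list \<Rightarrow> 'a list \<Rightarrow> nat" where
  "D_mat P t u v = (if \<not> same_block P u v then (2 * t + 1) - hamming u v else 0)"

definition N_val :: "'a itself \<Rightarrow> 'i set \<Rightarrow> ('i \<Rightarrow> 'i \<Rightarrow> nat) \<Rightarrow> nat" where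
  "N_val _ I D = (LEAST r. \<exists>z :: 'i \<Rightarrow> 'a list.
      (\<forall>i\<in>I. length (z i) = r) \<and>
      (\<forall>i\<in>I. \<forall>j\<in>I. i \<noteq> j \<longrightarrow> hamming (z i) (z j) \<ge> D i j))"

end

theory Submission
  imports Defs
begin

lemma hamming_append:
  assumes "length xs = length xs'"
  shows "hamming (xs @ ys) (xs' @ ys') = hamming xs xs' + hamming ys ys'"
proof -
  let ?A = "{i. i < length xs \<and> i < length xs' \<and> xs ! i \<noteq> xs' ! i}"
  let ?B = "{i. i < length ys \<and> i < length ys' \<and> ys ! i \<noteq> ys' ! i}"
  have eq: "{i. i < length (xs@ys) \<and> i < length (xs'@ys') \<and> (xs@ys) ! i \<noteq> (xs'@ys') ! i}
      = ?A \<union> (\<lambda>i. i + length xs) ` ?B"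
  proof (rule set_eqI)
    fix i
    show "i \<in> {i. i < length (xs@ys) \<and> i < length (xs'@ys') \<and> (xs@ys) ! i \<noteq> (xs'@ys') ! i}
      \<longleftrightarrow> i \<in> ?A \<union> (\<lambda>i. i + length xs) ` ?B"
    proof (cases "i < length xs")
      case True then show ?thesis using assms by (auto simp: nth_append)
    next
      case False
      then have "i = (i - length xs) + length xs" by simp
      have "i \<in> (\<lambda>i. i + length xs) ` ?B \<longleftrightarrow> i - length xs \<in> ?B"
        using False by (auto simp: image_iff intro: exI[of _ "i - length xs"])
      then show ?thesis using False assms by (auto simp: nth_append)
    qed
  qed
  have fin: "finite ?A" "finite ?B" by auto
  have disj: "?A \<inter> (\<lambda>i. i + length xs) ` ?B = {}" by auto
  have inj: "inj_on (\<lambda>i. i + length xs) ?B" by (auto simp: inj_on_def)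
  show ?thesis unfolding hamming_def eq
    using card_Un_disjoint[OF fin(1) finite_imageI[OF fin(2)] disj] card_image[OF inj]
    by simp
qed

theorem theorem8:
  fixes P :: "('a :: {field, finite}) list set set"
    and k t :: nat and U :: "'a list set" and phi :: "'a list \<Rightarrow> 'a list"
  assumes "partition_on (vecs k) P"
    and "t > 0"
    and "block_preserving_contraction k P U phi"
  shows "r_opt TYPE('a) k P t = N_val TYPE('a) U (D_mat P t)"
proof -
  have Uk: "U \<subseteq> vecs k" and phiU: "\<And>u. u \<in> vecs k \<Longrightarrow> phi u \<in> U"
    and phiB: "\<And>u. u \<in> vecs k \<Longrightarrow> same_block P (phi u) u"
    and phid: "\<And>u v. u \<in> vecs k \<Longrightarrow> v \<in> vecs k \<Longrightarrow> \<not> same_block P u v \<Longrightarrow>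
         hamming (phi u) (phi v) \<le> hamming u v"
    using assms(3) unfolding block_preserving_contraction_def by auto
  have disj: "disjoint P" using assms(1) by (rule partition_onD2)
  have notsame: "\<not> same_block P (phi u) (phi v)"
    if u: "u \<in> vecs k" and v: "v \<in> vecs k" and ns: "\<not> same_block P u v" for u v
  proof
    assume s: "same_block P (phi u) (phi v)"
    obtain B where B: "B \<in> P" "phi u \<in> B" "phi v \<in> B" using s unfolding same_block_def by blast
    obtain B1 where B1: "B1 \<in> P" "phi u \<in> B1" "u \<in> B1" using phiB[OF u] unfolding same_block_def by blast
    obtain B2 where B2: "B2 \<in> P" "phi v \<in> B2" "v \<in> B2" using phiB[OF v] unfolding same_block_def by blast
    have "B1 = B" using disjointD[OF disj B1(1) B(1)] B1 B by blast
    moreover have "B2 = B" using disjointD[OF disj B2(1) B(1)] B2 B by blast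
    ultimately show False using ns B1 B2 unfolding same_block_def by blast
  qed
  have iff: "(\<exists>p :: 'a list \<Rightarrow> 'a list. is_encoding k P t r p) \<longleftrightarrow>
    (\<exists>z :: 'a list \<Rightarrow> 'a list. (\<forall>i\<in>U. length (z i) = r) \<and>
      (\<forall>i\<in>U. \<forall>j\<in>U. i \<noteq> j \<longrightarrow> hamming (z i) (z j) \<ge> D_mat P t i j))" for r
  proof
    assume "\<exists>p :: 'a list \<Rightarrow> 'a list. is_encoding k P t r p"
    then obtain p :: "'a list \<Rightarrow> 'a list" where p: "is_encoding k P t r p" by blast
    have "(\<forall>i\<in>U. length (p i) = r)" using p Uk unfolding is_encoding_def by auto
    moreover have "hamming (p i) (p j) \<ge> D_mat P t i j" if "i \<in> U" "j \<in> U" for i j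
    proof (cases "same_block P i j")
      case True then show ?thesis by (simp add: D_mat_def)
    next
      case False
      have ik: "i \<in> vecs k" "j \<in> vecs k" using that Uk by auto
      then have "hamming (i @ p i) (j @ p j) \<ge> 2 * t + 1"
        using p False unfolding is_encoding_def by blast
      moreover have "length i = length j" using ik by (simp add: vecs_def)
      ultimately show ?thesis using hamming_append[of i j "p i" "p j"] False by (simp add: D_mat_def)
    qed
    ultimately show "\<exists>z :: 'a list \<Rightarrow> 'a list. (\<forall>i\<in>U. length (z i) = r) \<and>
      (\<forall>i\<in>U. \<forall>j\<in>U. i \<noteq> j \<longrightarrow> hamming (z i) (z j) \<ge> D_mat P t i j)" by blast
  next
    assume "\<exists>z :: 'a list \<Rightarrow> 'a list. (\<forall>i\<in>U. length (z i) = r) \<and>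
      (\<forall>i\<in>U. \<forall>j\<in>U. i \<noteq> j \<longrightarrow> hamming (z i) (z j) \<ge> D_mat P t i j)"
    then obtain z :: "'a list \<Rightarrow> 'a list" where zl: "\<forall>i\<in>U. length (z i) = r"
      and zd: "\<forall>i\<in>U. \<forall>j\<in>U. i \<noteq> j \<longrightarrow> hamming (z i) (z j) \<ge> D_mat P t i j" by blast
    have "is_encoding k P t r (\<lambda>u. z (phi u))"
      unfolding is_encoding_def
    proof (intro conjI ballI impI)
      fix u :: "'a list" assume "u \<in> vecs k" then show "length (z (phi u)) = r" using zl phiU by auto
    next
      fix u v :: "'a list" assume u: "u \<in> vecs k" and v: "v \<in> vecs k" and ns: "\<not> same_block P u v"
      have ns': "\<not> same_block P (phi u) (phi v)" using notsame[OF u v ns] .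
      have "phi u \<noteq> phi v"
      proof
        assume eq: "phi u = phi v"
        obtain B1 where B1: "B1 \<in> P" "phi u \<in> B1" using phiB[OF u] unfolding same_block_def by blast
        have "same_block P (phi u) (phi v)" unfolding same_block_def using B1 eq[symmetric] by auto
        then show False using ns' by simp
      qed
      then have "hamming (z (phi u)) (z (phi v)) \<ge> D_mat P t (phi u) (phi v)"
        using zd phiU[OF u] phiU[OF v] by simp
      then have "hamming (z (phi u)) (z (phi v)) \<ge> 2 * t + 1 - hamming (phi u) (phi v)"
        using ns' by (simp add: D_mat_def)
      moreover have "hamming (phi u) (phi v) \<le> hamming u v" using phid u v ns by blast
      moreover have "length u = length v" using u v by (simp add: vecs_def)
      ultimately show "2 * t + 1 \<le> hamming (u @ z (phi u)) (v @ z (phi v))"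
        using hamming_append[of u v "z (phi u)" "z (phi v)"] by simp
    qed
    then show "\<exists>p :: 'a list \<Rightarrow> 'a list. is_encoding k P t r p" by blast
  qed
  show ?thesis unfolding r_opt_def N_val_def by (simp only: iff)
qed

end
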